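(* For $n \ge 0$ let $w(n,0)$ denote the number of compositions of $n$ with all parts in $\{1,2\}$ having exactly $0$ water cells. Then \[ \sum_{n \ge 0} w(n,0) q^n = \frac{1}{1-q} + \frac{q^2}{(1-q)^2(1-q^2)} = \frac{1-q+q^3}{1 - 2 q + 2 q^3 - q^4}. \] Moreover, for each $n \ge 0$ the following values are equal: (a) $w(n,0)$; (b) $\lfloor n^2/4 \rfloor + 1$; (c) $w(n-2,0) + n - 1$ (for $n \ge 2$); (d) $2w(n-1,0) - 2w(n-3,0) + w(n-4,0)$ (for $n \ge 4$).
   Context: A composition of $n \ge 0$ is a finite sequence $(c_1,\dots,c_t)$ of positive integers with $c_1+\cdots+c_t=n$; the empty composition is the unique composition of $0$. Let $C_{12}(n)$ be the set of compositions of $n$ all of whose parts lie in $\{1,2\}$. The number of water cells of a composition $(c_1,\dots,c_t)$ is $\sum_{i=1}^{t} \max\bigl(0, \min(\max_{j \le i} c_j, \max_{j \ge i} c_j) - c_i\bigr)$ (the number of unit squares that would hold water poured over its bargraph, in which column $i$ has height $c_i$). For $n,k \ge 0$, $W(n,k)$ is the set of compositions in $C_{12}(n)$ with exactly $k$ water cells and $w(n,k)=|W(n,k)|$. *)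

theory Defs
  imports Main "HOL-Computational_Algebra.Formal_Power_Series"
begin

definition C12 :: "nat \<Rightarrow> nat list set" where
  "C12 n = {c. set c \<subseteq> {1,2} \<and> sum_list c = n}"

text \<open>Water cells: column i (0-based) holds min(max of c_0..c_i, max of c_i..c_(t-1)) - c_i
  (truncated subtraction on nat realises max(0, ...)).\<close>
definition water :: "nat list \<Rightarrow> nat" where
  "water c = (\<Sum>i<length c.
      min (Max (set (take (Suc i) c))) (Max (set (drop i c))) - c ! i)"

definition W :: "nat \<Rightarrow> nat \<Rightarrow> nat list set" where
  "W n k = {c \<in> C12 n. water c = k}"

definition w :: "nat \<Rightarrow> nat \<Rightarrow> nat" where
  "w n k = card (W n k)"

end

theory Submission imports Defs begin

definition L :: "nat \<Rightarrow> (nat list \<Rightarrow> bool) \<Rightarrow> nat list set" where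
  "L n P = {c. set c \<subseteq> {1,2} \<and> sum_list c = n \<and> P c}"

lemma len_le: "set c \<subseteq> {1,2} \<Longrightarrow> length c \<le> sum_list c"
  by (induction c) auto

lemma L_finite: "finite (L n P)"
proof -
  have "L n P \<subseteq> {xs. set xs \<subseteq> {1,2} \<and> length xs \<le> n}"
    unfolding L_def using len_le by fastforce
  thus ?thesis by (rule finite_subset) (rule finite_lists_length_le, simp)
qed

lemma L0: "L 0 P = (if P [] then {[]} else {})"
proof -
  have "set c \<subseteq> {1,2} \<Longrightarrow> sum_list c = 0 \<Longrightarrow> c = []" for c :: "nat list"
    by (cases c) auto
  thus ?thesis unfolding L_def by auto
qed

lemma L1: "L 1 P = (if P [1] then {[1]} else {})"
proof -
  have "set c \<subseteq> {1,2} \<Longrightarrow> sum_list c = 1 \<Longrightarrow> c = [1]" for c :: "nat list"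
  proof (cases c)
    case (Cons x ys)
    assume "set c \<subseteq> {1,2}" "sum_list c = 1"
    with Cons have "x = 1" "sum_list ys = 0" "set ys \<subseteq> {1,2}" by auto
    moreover have "ys = []" using \<open>sum_list ys = 0\<close> \<open>set ys \<subseteq> {1,2}\<close> by (cases ys) auto
    ultimately show ?thesis using Cons by simp
  qed auto
  thus ?thesis unfolding L_def by auto
qed

lemma L1': "L (Suc 0) P = (if P [1] then {[1]} else {})"
  using L1 by simp

lemma L_SS: "card (L (Suc (Suc n)) P) = card (L (Suc n) (\<lambda>ys. P (1#ys))) + card (L n (\<lambda>ys. P (2#ys)))"
proof -
  have eq: "L (Suc (Suc n)) P = Cons 1 ` L (Suc n) (\<lambda>ys. P (1#ys)) \<union> Cons 2 ` L n (\<lambda>ys. P (2#ys))"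
  proof (rule set_eqI, rule iffI)
    fix c assume c: "c \<in> L (Suc (Suc n)) P"
    then obtain x ys where cx: "c = x # ys" unfolding L_def by (cases c) auto
    with c have "x = 1 \<or> x = 2" unfolding L_def by auto
    then show "c \<in> Cons 1 ` L (Suc n) (\<lambda>ys. P (1#ys)) \<union> Cons 2 ` L n (\<lambda>ys. P (2#ys))"
      using c cx unfolding L_def by auto
  qed (auto simp: L_def)
  show ?thesis unfolding eq
    by (subst card_Un_disjoint) (auto simp: L_finite card_image)
qed

definition nw :: "nat list \<Rightarrow> bool" where
  "nw c = (\<forall>i<length c. \<not> (c!i = 1 \<and> 2 \<in> set (take i c) \<and> 2 \<in> set (drop (Suc i) c)))"

definition dec :: "nat list \<Rightarrow> bool" where
  "dec c = (\<forall>i<length c. c!i = 1 \<longrightarrow> 2 \<notin> set (drop (Suc i) c))"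

lemma all_less_Suc': "(\<forall>i<Suc n. Q i) = (Q 0 \<and> (\<forall>j<n. Q (Suc j)))"
  by (metis less_Suc_eq_0_disj)

lemma nw_1: "nw (1#ys) = nw ys"
  unfolding nw_def by (simp only: length_Cons all_less_Suc') auto

lemma nw_2: "nw (2#ys) = dec ys"
  unfolding nw_def dec_def by (simp only: length_Cons all_less_Suc') auto

lemma dec_1: "dec (1#ys) = (2 \<notin> set ys)"
proof -
  have "dec (1#ys) = (2 \<notin> set ys \<and> dec ys)"
    unfolding dec_def by (simp only: length_Cons all_less_Suc') auto
  moreover have "2 \<notin> set ys \<Longrightarrow> dec ys" unfolding dec_def
    by (meson in_set_dropD)
  ultimately show ?thesis by blast
qed

lemma dec_2: "dec (2#ys) = dec ys"
  unfolding dec_def by (simp only: length_Cons all_less_Suc') auto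

lemma no2: "card (L n (\<lambda>c. 2 \<notin> set c)) = 1"
proof -
  have "L n (\<lambda>c. 2 \<notin> set c) = {replicate n 1}"
  proof (rule set_eqI, rule iffI)
    fix c assume "c \<in> L n (\<lambda>c. 2 \<notin> set c)"
    hence s: "set c \<subseteq> {1}" "sum_list c = n" unfolding L_def by auto
    hence "c = replicate (length c) 1" by (metis replicate_length_same singletonD subsetD)
    moreover have "sum_list c = length c" using s(1) by (induction c) auto
    ultimately show "c \<in> {replicate n 1}" using s by simp
  qed (auto simp: L_def sum_list_replicate)
  thus ?thesis by simp
qed

lemma dec_count: "card (L n dec) = n div 2 + 1"
proof (induction n rule: less_induct)
  case (less n)
  show ?case
  proof (cases n)
    case 0 then show ?thesis by (simp add: L0 dec_def)
  next
    case (Suc m) note m = this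
    show ?thesis
    proof (cases m)
      case 0 then show ?thesis using m by (simp add: L1' dec_def)
    next
      case (Suc k)
      have "card (L n dec) = card (L (Suc k) (\<lambda>c. 2 \<notin> set c)) + card (L k dec)"
        using m Suc L_SS[of k dec, unfolded dec_1 dec_2] by simp
      also have "\<dots> = 1 + (k div 2 + 1)" using no2 less m Suc by simp
      finally show ?thesis using m Suc by simp
    qed
  qed
qed

lemma nw_count: "card (L n nw) = n^2 div 4 + 1"
proof (induction n rule: less_induct)
  case (less n)
  show ?case
  proof (cases n)
    case 0 then show ?thesis by (simp add: L0 nw_def)
  next
    case (Suc m) note m = this
    show ?thesis
    proof (cases m)
      case 0 then show ?thesis using m by (simp add: L1' nw_def)
    next
      case (Suc k)
      have "card (L n nw) = card (L (Suc k) nw) + card (L k dec)"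
        using m Suc L_SS[of k nw, unfolded nw_1 nw_2] by simp
      also have "\<dots> = (Suc k)^2 div 4 + 1 + (k div 2 + 1)" using dec_count less m Suc by simp
      also have "\<dots> = (Suc (Suc k))^2 div 4 + 1"
      proof -
        obtain j where "k = 2*j \<or> k = 2*j+1" by (metis oddE evenE)
        then show ?thesis
        proof
          assume k: "k = 2*j"
          have a: "(Suc k)^2 = 4*(j*j+j) + 1" "(Suc (Suc k))^2 = 4*((j+1)*(j+1))"
            by (simp_all add: k power2_eq_square algebra_simps)
          show ?thesis unfolding a using k by simp
        next
          assume k: "k = 2*j+1"
          have a: "(Suc k)^2 = 4*((j+1)*(j+1))" "(Suc (Suc k))^2 = 4*((j+1)*(j+2)) + 1"
            by (simp_all add: k power2_eq_square algebra_simps)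
          show ?thesis unfolding a using k by simp
        qed
      qed
      finally show ?thesis using m Suc by simp
    qed
  qed
qed

lemma Max12: "finite S \<Longrightarrow> S \<noteq> {} \<Longrightarrow> S \<subseteq> {1,2::nat} \<Longrightarrow> Max S = (if 2 \<in> S then 2 else 1)"
proof -
  assume a: "finite S" "S \<noteq> {}" "S \<subseteq> {1,2::nat}"
  show ?thesis
  proof (cases "2 \<in> S")
    case True
    then have "Max S = 2" using a by (intro Max_eqI) auto
    then show ?thesis using True by simp
  next
    case False
    then have "S = {1}" using a by auto
    then show ?thesis by simp
  qed
qed

lemma water_nw: assumes s: "set c \<subseteq> {1,2}" shows "(water c = 0) = nw c"
proof -
  have t: "(min (Max (set (take (Suc i) c))) (Max (set (drop i c))) - c ! i = 0)
      = (\<not> (c!i = 1 \<and> 2 \<in> set (take i c) \<and> 2 \<in> set (drop (Suc i) c)))" if i: "i < length c" for i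
  proof -
    have ci: "c!i \<in> {1,2}" using s i nth_mem by (metis subsetD)
    have st: "set (take (Suc i) c) = insert (c!i) (set (take i c))"
      using i by (simp add: take_Suc_conv_app_nth)
    have sd: "set (drop i c) = insert (c!i) (set (drop (Suc i) c))"
      using i by (simp add: Cons_nth_drop_Suc[symmetric])
    have s1: "set (take i c) \<subseteq> {1,2}" "set (drop (Suc i) c) \<subseteq> {1,2}"
      using s set_take_subset set_drop_subset by (metis subset_trans)+
    have m1: "Max (set (take (Suc i) c)) = (if 2 \<in> set (take (Suc i) c) then 2 else 1)"
      by (rule Max12) (use st ci s1 in auto)
    have m2: "Max (set (drop i c)) = (if 2 \<in> set (drop i c) then 2 else 1)"
      by (rule Max12) (use sd ci s1 in auto)
    from ci have "c!i = 1 \<or> c!i = 2" by simp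
    then show ?thesis
    proof
      assume h: "c!i = 1"
      show ?thesis unfolding m1 m2 unfolding st sd h by simp
    next
      assume h: "c!i = 2"
      show ?thesis unfolding m1 m2 unfolding st sd h by simp
    qed
  qed
  have "(water c = 0) = (\<forall>i<length c. min (Max (set (take (Suc i) c))) (Max (set (drop i c))) - c ! i = 0)"
    unfolding water_def by (simp only: sum_eq_0_iff finite_lessThan) blast
  also have "\<dots> = nw c" unfolding nw_def using t by auto
  finally show ?thesis .
qed

lemma w0: "w n 0 = n^2 div 4 + 1"
proof -
  have "W n 0 = L n nw" unfolding W_def L_def C12_def using water_nw by auto
  thus ?thesis unfolding w_def using nw_count by simp
qed

lemma sq_even: "(2*j::nat)^2 div 4 = j*j" by (simp add: power2_eq_square)
lemma sq_odd: "(2*j+1::nat)^2 div 4 = j*j+j"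
proof -
  have "(2*j+1::nat)^2 = 4*(j*j+j) + 1" by (simp add: power2_eq_square algebra_simps)
  thus ?thesis by simp
qed

lemma rec_c: "n \<ge> 2 \<Longrightarrow> w n 0 = w (n - 2) 0 + n - 1"
proof -
  assume n: "n \<ge> 2"
  obtain j where "n = 2*j \<or> n = 2*j+1" by (metis oddE evenE)
  then show ?thesis
  proof
    assume h: "n = 2*j"
    then obtain i where i: "j = Suc i" using n by (cases j) auto
    have "n - 2 = 2*i" using h i by simp
    then show ?thesis unfolding w0 using h i sq_even[of i] sq_even[of j] by (simp add: algebra_simps)
  next
    assume h: "n = 2*j+1"
    then obtain i where i: "j = Suc i" using n by (cases j) auto
    have "n - 2 = 2*i+1" using h i by simp
    then show ?thesis unfolding w0 using h i sq_odd[of i] sq_odd[of j] by (simp add: algebra_simps)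
  qed
qed

lemma rec_d: "n \<ge> 4 \<Longrightarrow> int (w n 0) = 2 * int (w (n - 1) 0) - 2 * int (w (n - 3) 0) + int (w (n - 4) 0)"
proof -
  assume n: "n \<ge> 4"
  obtain j where "n = 2*j \<or> n = 2*j+1" by (metis oddE evenE)
  then show ?thesis
  proof
    assume h: "n = 2*j"
    define i where "i = j - 2"
    have i: "j = i + 2" using n h unfolding i_def by presburger 
    have e: "n = 2*(i+2)" "n - 1 = 2*(i+1)+1" "n - 3 = 2*i+1" "n - 4 = 2*i" using h i by auto
    show ?thesis unfolding w0 e(2-4) unfolding e(1) by (simp only: sq_even sq_odd) (simp add: algebra_simps)
  next
    assume h: "n = 2*j+1"
    define i where "i = j - 2"
    have i: "j = i + 2" using n h unfolding i_def by presburger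
    have e: "n = 2*(i+2)+1" "n - 1 = 2*(i+2)" "n - 3 = 2*(i+1)" "n - 4 = 2*i+1" using h i by auto
    show ?thesis unfolding w0 e(2-4) unfolding e(1) by (simp only: sq_even sq_odd) (simp add: algebra_simps)
  qed
qed

lemma wsmall: "w 0 0 = 1" "w (Suc 0) 0 = Suc 0" "w 2 0 = 2" "w 3 0 = 3"
  by (simp_all add: w0)

lemma AD: "Abs_fps (\<lambda>n. of_nat (w n 0) :: real) * (1 - 2 * fps_X + 2 * fps_X ^ 3 - fps_X ^ 4)
   = 1 - fps_X + fps_X ^ 3"
proof -
  define A where "A = Abs_fps (\<lambda>n. of_nat (w n 0) :: real)"
  have "A * (1 - 2 * fps_X + 2 * fps_X ^ 3 - fps_X ^ 4) = A - 2 * (fps_X * A) + 2 * (fps_X^3 * A) - fps_X^4 * A"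
    by (simp add: algebra_simps)
  also have "\<dots> = 1 - fps_X + fps_X ^ 3"
  proof (rule fps_ext)
    fix n
    have two: "fps_nth (2 * f) n = 2 * fps_nth f n" for f :: "real fps"
      by (metis fps_mult_left_const_nth numeral_fps_const)
    have L: "fps_nth (A - 2 * (fps_X * A) + 2 * (fps_X^3 * A) - fps_X^4 * A) n
       = real (w n 0) - 2 * (if n < 1 then 0 else real (w (n-1) 0)) + 2 * (if n < 3 then 0 else real (w (n-3) 0))
         - (if n < 4 then 0 else real (w (n-4) 0))"
      unfolding fps_sub_nth fps_add_nth two fps_X_power_mult_nth[of 1, simplified] fps_X_power_mult_nth
      by (simp add: A_def)
    have R: "fps_nth (1 - fps_X + fps_X ^ 3 :: real fps) n = (if n = 0 then 1 else 0) - (if n = 1 then 1 else 0) + (if n = 3 then 1 else 0)"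
      by (simp add: fps_X_power_nth fps_X_nth)
    have "real (w n 0) - 2 * (if n < 1 then 0 else real (w (n-1) 0)) + 2 * (if n < 3 then 0 else real (w (n-3) 0))
         - (if n < 4 then 0 else real (w (n-4) 0)) = (if n = 0 then 1 else 0) - (if n = 1 then 1 else 0) + (if n = 3 then 1 else 0)"
    proof (cases "n \<ge> 4")
      case True
      have "real_of_int (int (w n 0)) = real_of_int (2 * int (w (n - 1) 0) - 2 * int (w (n - 3) 0) + int (w (n - 4) 0))"
        using rec_d[OF True] by simp
      then show ?thesis using True by simp
    next
      case False
      then have "n = 0 \<or> n = 1 \<or> n = 2 \<or> n = 3" by auto
      then show ?thesis by (auto simp: wsmall)
    qed
    then show "fps_nth (A - 2 * (fps_X * A) + 2 * (fps_X^3 * A) - fps_X^4 * A) n = fps_nth (1 - fps_X + fps_X ^ 3 :: real fps) n"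
      unfolding L R .
  qed
  finally show ?thesis unfolding A_def .
qed

theorem theorem2p1:
  shows "Abs_fps (\<lambda>n. of_nat (w n 0) :: real)
           = inverse (1 - fps_X) + fps_X ^ 2 / ((1 - fps_X) ^ 2 * (1 - fps_X ^ 2))
       \<and> Abs_fps (\<lambda>n. of_nat (w n 0) :: real)
           = (1 - fps_X + fps_X ^ 3) / (1 - 2 * fps_X + 2 * fps_X ^ 3 - fps_X ^ 4)
       \<and> (\<forall>n. w n 0 = n ^ 2 div 4 + 1)
       \<and> (\<forall>n\<ge>2. w n 0 = w (n - 2) 0 + n - 1)
       \<and> (\<forall>n\<ge>4. int (w n 0) = 2 * int (w (n - 1) 0) - 2 * int (w (n - 3) 0) + int (w (n - 4) 0))"
proof -
  define A where "A = Abs_fps (\<lambda>n. of_nat (w n 0) :: real)"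
  define D :: "real fps" where "D = 1 - 2 * fps_X + 2 * fps_X ^ 3 - fps_X ^ 4"
  define N :: "real fps" where "N = 1 - fps_X + fps_X ^ 3"
  define M :: "real fps" where "M = (1 - fps_X) ^ 2 * (1 - fps_X ^ 2)"
  have MD: "M = D" unfolding M_def D_def by (simp add: algebra_simps power2_eq_square power3_eq_cube power4_eq_xxxx)
  have D0: "fps_nth D 0 \<noteq> 0" unfolding D_def by simp
  have M0: "fps_nth M 0 \<noteq> 0" using D0 MD by simp
  have X0: "fps_nth (1 - fps_X :: real fps) 0 \<noteq> 0" by simp
  have "A * D = N" unfolding A_def D_def N_def by (rule AD)
  have A: "A = N / D"
  proof -
    have "A = A * (D * inverse D)" using inverse_mult_eq_1'[OF D0] by simp
    also have "\<dots> = N * inverse D" using \<open>A * D = N\<close> by (simp add: mult.assoc[symmetric])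
    finally show ?thesis using fps_divide_unit[OF D0] by simp
  qed
  define E where "E = inverse (1 - fps_X) + fps_X ^ 2 / M"
  have "E * M = N"
  proof -
    have "E * M = (inverse (1 - fps_X) * (1 - fps_X)) * ((1 - fps_X) * (1 - fps_X ^ 2)) + fps_X^2 * (inverse M * M)"
      unfolding E_def fps_divide_unit[OF M0] by (simp add: M_def algebra_simps power2_eq_square)
    also have "\<dots> = (1 - fps_X) * (1 - fps_X ^ 2) + fps_X^2"
      using inverse_mult_eq_1[OF X0] inverse_mult_eq_1[OF M0] by simp
    also have "\<dots> = N" unfolding N_def by (simp add: algebra_simps power2_eq_square power3_eq_cube)
    finally show ?thesis .
  qed
  have E: "E = N / D"
  proof -
    have "E = E * (M * inverse M)" using inverse_mult_eq_1'[OF M0] by simp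
    also have "\<dots> = N * inverse M" using \<open>E * M = N\<close> by (simp add: mult.assoc[symmetric])
    finally show ?thesis using fps_divide_unit[OF D0] MD by simp
  qed
  show ?thesis
    using A E rec_c rec_d w0 unfolding A_def E_def M_def N_def D_def by auto
qed

end
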